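(* Let $\ast$ be a continuous $t$-norm and let $(X,M_X,\ast)$ and $(Y,M_Y,\ast)$ be compact non-Archimedean fuzzy metric spaces. Suppose that $t>0$ and $0<\varepsilon<1$ satisfy $M_{GH}(X,Y,t)>1-\varepsilon$. Then there exist $n\in\mathbb N$, points $x_1,\dots,x_n\in X$ and points $y_1,\dots,y_n\in Y$ such that: (i) for every $x\in X$ there is $i$ with $M_X(x,x_i,t)>(1-\varepsilon)\ast(1-\varepsilon)\ast(1-\varepsilon)$, and for every $y\in Y$ there is $i$ with $M_Y(y,y_i,t)>(1-\varepsilon)\ast(1-\varepsilon)\ast(1-\varepsilon)$; (ii) for all $i,j\in\{1,\dots,n\}$: (a) $M_X(x_i,x_j,t)\ge M_Y(y_i,y_j,t)\ast(1-\varepsilon)\ast(1-\varepsilon)$; (b) $M_Y(y_i,y_j,t)\ge M_X(x_i,x_j,t)\ast(1-\varepsilon)\ast(1-\varepsilon)$.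
   Context: A continuous $t$-norm is a binary operation $\ast:[0,1]\times[0,1]\to[0,1]$ which is associative, commutative, continuous, satisfies $a\ast 1=a$ for all $a$, and is monotone ($a\ast b\le c\ast d$ whenever $a\le c$, $b\le d$); by associativity, iterated expressions such as $a\ast b\ast c$ are unambiguous. A fuzzy metric space $(X,M,\ast)$ consists of a set $X$, a continuous $t$-norm $\ast$ and a map $M:X\times X\times[0,\infty)\to[0,1]$ such that for all $x,y,z\in X$ and $t,s>0$: (KM1) $M(x,y,0)=0$; (KM2) $M(x,y,t)=1$ for all $t>0$ if and only if $x=y$; (KM3) $M(x,y,t)=M(y,x,t)$; (KM4) $M(x,y,t)\ast M(y,z,s)\le M(x,z,t+s)$; (KM5) $M(x,y,\cdot):[0,\infty)\to[0,1]$ is left continuous. It is non-Archimedean if moreover $M(x,z,\max\{t,s\})\ge M(x,y,t)\ast M(y,z,s)$ for all $x,y,z\in X$, $t,s>0$; equivalently, $M(x,z,t)\ge M(x,y,t)\ast M(y,z,t)$ for all $x,y,z$, $t>0$, and $M(x,y,\cdot)$ is nondecreasing. The topology of $(X,M,\ast)$ is the one having as neighbourhood base at $x$ the balls $B(x,\varepsilon,t)=\{y\in X: M(x,y,t)>1-\varepsilon\}$, $0<\varepsilon<1$, $t>0$; "compact" refers to this topology. For nonempty compact $A,B\subseteq X$ and $t\ge 0$: $M(x,A,t)=\sup_{a\in A}M(x,a,t)$, $M(A,b,t)=\sup_{a\in A}M(a,b,t)$, and $H_M(A,B,t)=\min\{\inf_{a\in A}M(a,B,t),\ \inf_{b\in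 B}M(A,b,t)\}$. For non-Archimedean fuzzy metric spaces $(X,M_X,\ast)$, $(Y,M_Y,\ast)$ with the same $t$-norm, a fuzzy metric $M$ (with $t$-norm $\ast$) on the disjoint union $X\sqcup Y$ is admissible if its restrictions to $X$ and to $Y$ are $M_X$ and $M_Y$. The non-Archimedean Gromov–Hausdorff fuzzy metric is $M_{GH}(X,Y,t)=\sup\{H_M(X,Y,t): M \text{ an admissible non-Archimedean fuzzy metric on } X\sqcup Y\}$ for $t\ge0$. *)

theory Defs
  imports "HOL-Analysis.Analysis"
begin

text \<open>Continuous t-norm on [0,1], represented as a real function; only its values on
  [0,1] x [0,1] matter.\<close>
definition cont_tnorm :: "(real \<Rightarrow> real \<Rightarrow> real) \<Rightarrow> bool" where
  "cont_tnorm T \<longleftrightarrow>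
     (\<forall>a\<in>{0..1}. \<forall>b\<in>{0..1}. T a b \<in> {0..1}) \<and>
     (\<forall>a\<in>{0..1}. \<forall>b\<in>{0..1}. \<forall>c\<in>{0..1}. T (T a b) c = T a (T b c)) \<and>
     (\<forall>a\<in>{0..1}. \<forall>b\<in>{0..1}. T a b = T b a) \<and>
     continuous_on ({0..1} \<times> {0..1}) (\<lambda>(a, b). T a b) \<and>
     (\<forall>a\<in>{0..1}. T a 1 = a) \<and>
     (\<forall>a\<in>{0..1}. \<forall>b\<in>{0..1}. \<forall>c\<in>{0..1}. \<forall>d\<in>{0..1}.
        a \<le> c \<longrightarrow> b \<le> d \<longrightarrow> T a b \<le> T c d)"

text \<open>Fuzzy metric space (X, M, T) in the sense of Kramosil-Michalek (KM1)-(KM5);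
  M is only relevant on X x X x [0,\<infinity>).\<close>
definition fuzzy_metric :: "'a set \<Rightarrow> ('a \<Rightarrow> 'a \<Rightarrow> real \<Rightarrow> real) \<Rightarrow> (real \<Rightarrow> real \<Rightarrow> real) \<Rightarrow> bool" where
  "fuzzy_metric X M T \<longleftrightarrow>
     cont_tnorm T \<and>
     (\<forall>x\<in>X. \<forall>y\<in>X. \<forall>t\<ge>0. M x y t \<in> {0..1}) \<and>
     (\<forall>x\<in>X. \<forall>y\<in>X. M x y 0 = 0) \<and>
     (\<forall>x\<in>X. \<forall>y\<in>X. (\<forall>t>0. M x y t = 1) \<longleftrightarrow> x = y) \<and>
     (\<forall>x\<in>X. \<forall>y\<in>X. \<forall>t>0. M x y t = M y x t) \<and>
     (\<forall>x\<in>X. \<forall>y\<in>X. \<forall>z\<in>X. \<forall>t>0. \<forall>s>0. T (M x y t) (M y z s) \<le> M x z (t + s)) \<and>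
     (\<forall>x\<in>X. \<forall>y\<in>X. \<forall>t>0. ((M x y) \<longlongrightarrow> M x y t) (at_left t))"

definition na_fuzzy_metric :: "'a set \<Rightarrow> ('a \<Rightarrow> 'a \<Rightarrow> real \<Rightarrow> real) \<Rightarrow> (real \<Rightarrow> real \<Rightarrow> real) \<Rightarrow> bool" where
  "na_fuzzy_metric X M T \<longleftrightarrow>
     fuzzy_metric X M T \<and>
     (\<forall>x\<in>X. \<forall>y\<in>X. \<forall>z\<in>X. \<forall>t>0. \<forall>s>0. M x z (max t s) \<ge> T (M x y t) (M y z s))"

definition fball :: "'a set \<Rightarrow> ('a \<Rightarrow> 'a \<Rightarrow> real \<Rightarrow> real) \<Rightarrow> 'a \<Rightarrow> real \<Rightarrow> real \<Rightarrow> 'a set" where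
  "fball X M x e t = {y\<in>X. M x y t > 1 - e}"

definition fopen :: "'a set \<Rightarrow> ('a \<Rightarrow> 'a \<Rightarrow> real \<Rightarrow> real) \<Rightarrow> 'a set \<Rightarrow> bool" where
  "fopen X M U \<longleftrightarrow> U \<subseteq> X \<and>
     (\<forall>x\<in>U. \<exists>e t. 0 < e \<and> e < 1 \<and> 0 < t \<and> fball X M x e t \<subseteq> U)"

definition fcompact :: "'a set \<Rightarrow> ('a \<Rightarrow> 'a \<Rightarrow> real \<Rightarrow> real) \<Rightarrow> bool" where
  "fcompact X M \<longleftrightarrow>
     (\<forall>\<U>. (\<forall>U\<in>\<U>. fopen X M U) \<and> X \<subseteq> \<Union>\<U> \<longrightarrow>
        (\<exists>\<F>. \<F> \<subseteq> \<U> \<and> finite \<F> \<and> X \<subseteq> \<Union>\<F>))"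

definition hausdorff_fm :: "('a \<Rightarrow> 'a \<Rightarrow> real \<Rightarrow> real) \<Rightarrow> 'a set \<Rightarrow> 'a set \<Rightarrow> real \<Rightarrow> real" where
  "hausdorff_fm M A B t =
     min (INF a\<in>A. (SUP b\<in>B. M a b t)) (INF b\<in>B. (SUP a\<in>A. M a b t))"

definition admissible :: "'a set \<Rightarrow> ('a \<Rightarrow> 'a \<Rightarrow> real \<Rightarrow> real) \<Rightarrow> 'b set \<Rightarrow> ('b \<Rightarrow> 'b \<Rightarrow> real \<Rightarrow> real)
    \<Rightarrow> (real \<Rightarrow> real \<Rightarrow> real) \<Rightarrow> ('a + 'b \<Rightarrow> 'a + 'b \<Rightarrow> real \<Rightarrow> real) \<Rightarrow> bool" where
  "admissible X MX Y MY T M \<longleftrightarrow>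
     na_fuzzy_metric (Inl ` X \<union> Inr ` Y) M T \<and>
     (\<forall>x\<in>X. \<forall>x'\<in>X. \<forall>t\<ge>0. M (Inl x) (Inl x') t = MX x x' t) \<and>
     (\<forall>y\<in>Y. \<forall>y'\<in>Y. \<forall>t\<ge>0. M (Inr y) (Inr y') t = MY y y' t)"

definition M_GH :: "'a set \<Rightarrow> ('a \<Rightarrow> 'a \<Rightarrow> real \<Rightarrow> real) \<Rightarrow> 'b set \<Rightarrow> ('b \<Rightarrow> 'b \<Rightarrow> real \<Rightarrow> real)
    \<Rightarrow> (real \<Rightarrow> real \<Rightarrow> real) \<Rightarrow> real \<Rightarrow> real" where
  "M_GH X MX Y MY T t =
     (SUP M\<in>{M. admissible X MX Y MY T M}. hausdorff_fm M (Inl ` X) (Inr ` Y) t)"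

end

theory Submission
  imports Defs
begin

lemma tn_facts:
  assumes "cont_tnorm T"
  shows "\<And>a b. a\<in>{0..1} \<Longrightarrow> b\<in>{0..1} \<Longrightarrow> T a b \<in> {0..1}"
    and "\<And>a b. a\<in>{0..1} \<Longrightarrow> b\<in>{0..1} \<Longrightarrow> T a b = T b a"
    and "\<And>a. a\<in>{0..1} \<Longrightarrow> T a 1 = a"
    and "\<And>a b c d. a\<in>{0..1} \<Longrightarrow> b\<in>{0..1} \<Longrightarrow> c\<in>{0..1} \<Longrightarrow> d\<in>{0..1} \<Longrightarrow> a \<le> c \<Longrightarrow> b \<le> d \<Longrightarrow> T a b \<le> T c d"
    and "\<And>a. a\<in>{0..1} \<Longrightarrow> T a 0 = 0"
    and "\<And>a. a\<in>{0..1} \<Longrightarrow> T 0 a = 0"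
proof -
  show t1: "\<And>a b. a\<in>{0..1} \<Longrightarrow> b\<in>{0..1} \<Longrightarrow> T a b \<in> {0..1}"
    and t2: "\<And>a b. a\<in>{0..1} \<Longrightarrow> b\<in>{0..1} \<Longrightarrow> T a b = T b a"
    and t3: "\<And>a. a\<in>{0..1} \<Longrightarrow> T a 1 = a"
    and t4: "\<And>a b c d. a\<in>{0..1} \<Longrightarrow> b\<in>{0..1} \<Longrightarrow> c\<in>{0..1} \<Longrightarrow> d\<in>{0..1} \<Longrightarrow> a \<le> c \<Longrightarrow> b \<le> d \<Longrightarrow> T a b \<le> T c d"
    using assms unfolding cont_tnorm_def by blast+
  fix a :: real assume a: "a \<in> {0..1}"
  have "T a 0 \<le> T 1 0" using t4[of a 0 1 0] a by auto
  also have "\<dots> = T 0 1" using t2[of 1 0] by auto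
  also have "\<dots> = 0" using t3[of 0] by auto
  finally show "T a 0 = 0" using t1[of a 0] a by auto
  then show "T 0 a = 0" using t2[of a 0] a by auto
qed

lemma fm_D:
  assumes "fuzzy_metric X M T"
  shows "cont_tnorm T"
    and "\<forall>x\<in>X. \<forall>y\<in>X. \<forall>t\<ge>0. M x y t \<in> {0..1}"
    and "\<forall>x\<in>X. \<forall>y\<in>X. M x y 0 = 0"
    and "\<forall>x\<in>X. \<forall>y\<in>X. (\<forall>t>0. M x y t = 1) \<longleftrightarrow> x = y"
    and "\<forall>x\<in>X. \<forall>y\<in>X. \<forall>t>0. M x y t = M y x t"
    and "\<forall>x\<in>X. \<forall>y\<in>X. \<forall>z\<in>X. \<forall>t>0. \<forall>s>0. T (M x y t) (M y z s) \<le> M x z (t + s)"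
    and "\<forall>x\<in>X. \<forall>y\<in>X. \<forall>t>0. ((M x y) \<longlongrightarrow> M x y t) (at_left t)"
proof -
  have H: "cont_tnorm T \<and>
     (\<forall>x\<in>X. \<forall>y\<in>X. \<forall>t\<ge>0. M x y t \<in> {0..1}) \<and>
     (\<forall>x\<in>X. \<forall>y\<in>X. M x y 0 = 0) \<and>
     (\<forall>x\<in>X. \<forall>y\<in>X. (\<forall>t>0. M x y t = 1) \<longleftrightarrow> x = y) \<and>
     (\<forall>x\<in>X. \<forall>y\<in>X. \<forall>t>0. M x y t = M y x t) \<and>
     (\<forall>x\<in>X. \<forall>y\<in>X. \<forall>z\<in>X. \<forall>t>0. \<forall>s>0. T (M x y t) (M y z s) \<le> M x z (t + s)) \<and>
     (\<forall>x\<in>X. \<forall>y\<in>X. \<forall>t>0. ((M x y) \<longlongrightarrow> M x y t) (at_left t))"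
    using assms unfolding fuzzy_metric_def .
  show "cont_tnorm T" using H by (elim conjE) assumption
  show "\<forall>x\<in>X. \<forall>y\<in>X. \<forall>t\<ge>0. M x y t \<in> {0..1}" using H by (elim conjE) assumption
  show "\<forall>x\<in>X. \<forall>y\<in>X. M x y 0 = 0" using H by (elim conjE) assumption
  show "\<forall>x\<in>X. \<forall>y\<in>X. (\<forall>t>0. M x y t = 1) \<longleftrightarrow> x = y" using H by (elim conjE) assumption
  show "\<forall>x\<in>X. \<forall>y\<in>X. \<forall>t>0. M x y t = M y x t" using H by (elim conjE) assumption
  show "\<forall>x\<in>X. \<forall>y\<in>X. \<forall>z\<in>X. \<forall>t>0. \<forall>s>0. T (M x y t) (M y z s) \<le> M x z (t + s)" using H by (elim conjE) assumption
  show "\<forall>x\<in>X. \<forall>y\<in>X. \<forall>t>0. ((M x y) \<longlongrightarrow> M x y t) (at_left t)" using H by (elim conjE) assumption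
qed

lemma na_D:
  assumes "na_fuzzy_metric X M T"
  shows "fuzzy_metric X M T"
    and "\<forall>x\<in>X. \<forall>y\<in>X. \<forall>z\<in>X. \<forall>t>0. \<forall>s>0. M x z (max t s) \<ge> T (M x y t) (M y z s)"
proof -
  have H: "fuzzy_metric X M T \<and> (\<forall>x\<in>X. \<forall>y\<in>X. \<forall>z\<in>X. \<forall>t>0. \<forall>s>0. M x z (max t s) \<ge> T (M x y t) (M y z s))"
    using assms unfolding na_fuzzy_metric_def .
  show "fuzzy_metric X M T" using H by (elim conjE) assumption
  show "\<forall>x\<in>X. \<forall>y\<in>X. \<forall>z\<in>X. \<forall>t>0. \<forall>s>0. M x z (max t s) \<ge> T (M x y t) (M y z s)" using H by (elim conjE) assumption
qed

lemma ct_cont: "cont_tnorm T \<Longrightarrow> continuous_on ({0..1} \<times> {0..1}) (\<lambda>(a, b). T a b)"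
  unfolding cont_tnorm_def by (elim conjE) assumption

definition glue :: "('a \<Rightarrow> 'a \<Rightarrow> real \<Rightarrow> real) \<Rightarrow> ('b \<Rightarrow> 'b \<Rightarrow> real \<Rightarrow> real) \<Rightarrow> 'a + 'b \<Rightarrow> 'a + 'b \<Rightarrow> real \<Rightarrow> real" where
  "glue MX MY u v t = (case u of Inl a \<Rightarrow> (case v of Inl b \<Rightarrow> MX a b t | Inr _ \<Rightarrow> 0)
     | Inr a \<Rightarrow> (case v of Inl _ \<Rightarrow> 0 | Inr b \<Rightarrow> MY a b t))"

lemma glue_simps[simp]:
  "glue MX MY (Inl a) (Inl b) t = MX a b t" "glue MX MY (Inr c) (Inr d) t = MY c d t"
  "glue MX MY (Inl a) (Inr d) t = 0" "glue MX MY (Inr c) (Inl b) t = 0"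
  by (simp_all add: glue_def)

lemma admissible_exists:
  assumes T: "cont_tnorm T" and X: "na_fuzzy_metric X MX T" and Y: "na_fuzzy_metric Y MY T"
  shows "admissible X MX Y MY T (glue MX MY)"
proof -
  note tn = tn_facts[OF T]
  have rX: "\<And>x y t. x\<in>X \<Longrightarrow> y\<in>X \<Longrightarrow> t\<ge>0 \<Longrightarrow> MX x y t \<in> {0..1}" using fm_D[OF na_D(1)[OF X]] by auto
  have rY: "\<And>x y t. x\<in>Y \<Longrightarrow> y\<in>Y \<Longrightarrow> t\<ge>0 \<Longrightarrow> MY x y t \<in> {0..1}" using fm_D[OF na_D(1)[OF Y]] by auto
  let ?Z = "Inl ` X \<union> Inr ` Y"
  let ?M = "glue MX MY"
  have r: "\<And>u v t. u\<in>?Z \<Longrightarrow> v\<in>?Z \<Longrightarrow> t\<ge>0 \<Longrightarrow> ?M u v t \<in> {0..1}"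
    using rX rY by auto
  have fX: "\<And>x y. x\<in>X \<Longrightarrow> y\<in>X \<Longrightarrow> MX x y 0 = 0"
    and kX: "\<And>x y. x\<in>X \<Longrightarrow> y\<in>X \<Longrightarrow> (\<forall>t>0. MX x y t = 1) \<longleftrightarrow> x = y"
    and sX: "\<And>x y t. x\<in>X \<Longrightarrow> y\<in>X \<Longrightarrow> t>0 \<Longrightarrow> MX x y t = MX y x t"
    using fm_D[OF na_D(1)[OF X]] by auto
  have fY: "\<And>x y. x\<in>Y \<Longrightarrow> y\<in>Y \<Longrightarrow> MY x y 0 = 0"
    and kY: "\<And>x y. x\<in>Y \<Longrightarrow> y\<in>Y \<Longrightarrow> (\<forall>t>0. MY x y t = 1) \<longleftrightarrow> x = y"
    and sY: "\<And>x y t. x\<in>Y \<Longrightarrow> y\<in>Y \<Longrightarrow> t>0 \<Longrightarrow> MY x y t = MY y x t"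
    using fm_D[OF na_D(1)[OF Y]] by auto
  have z0: "\<And>u v. u\<in>?Z \<Longrightarrow> v\<in>?Z \<Longrightarrow> ?M u v 0 = 0"
    using fX fY by auto
  have reX: "\<And>a t. a\<in>X \<Longrightarrow> t>0 \<Longrightarrow> MX a a t = 1" using kX by blast
  have reY: "\<And>a t. a\<in>Y \<Longrightarrow> t>0 \<Longrightarrow> MY a a t = 1" using kY by blast
  have km2: "\<And>u v. u\<in>?Z \<Longrightarrow> v\<in>?Z \<Longrightarrow> (\<forall>t>0. ?M u v t = 1) \<longleftrightarrow> u = v"
  proof -
    fix u v assume "u\<in>?Z" "v\<in>?Z"
    then show "(\<forall>t>0. ?M u v t = 1) \<longleftrightarrow> u = v"
      using kX kY reX reY by (auto dest: spec[of _ 1])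
  qed
  have sym: "\<And>u v t. u\<in>?Z \<Longrightarrow> v\<in>?Z \<Longrightarrow> t>0 \<Longrightarrow> ?M u v t = ?M v u t"
    using sX sY by auto
  have tri: "\<And>u v w t s. u\<in>?Z \<Longrightarrow> v\<in>?Z \<Longrightarrow> w\<in>?Z \<Longrightarrow> t>0 \<Longrightarrow> s>0 \<Longrightarrow> T (?M u v t) (?M v w s) \<le> ?M u w (t+s)"
  proof -
    fix u v w and t s :: real assume u: "u\<in>?Z" and v: "v\<in>?Z" and w: "w\<in>?Z" and ts: "t>0" "s>0"
    have A: "T (MX a b t) (MX b c s) \<le> MX a c (t+s)" if "a\<in>X" "b\<in>X" "c\<in>X" for a b c
      using fm_D(6)[OF na_D(1)[OF X]] that ts by auto
    have B: "T (MY a b t) (MY b c s) \<le> MY a c (t+s)" if "a\<in>Y" "b\<in>Y" "c\<in>Y" for a b c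
      using fm_D(6)[OF na_D(1)[OF Y]] that ts by auto
    show "T (?M u v t) (?M v w s) \<le> ?M u w (t+s)"
      using u v w A B tn(5,6) rX rY ts by auto
  qed
  have lc: "\<And>u v t. u\<in>?Z \<Longrightarrow> v\<in>?Z \<Longrightarrow> t>0 \<Longrightarrow> ((?M u v) \<longlongrightarrow> ?M u v t) (at_left t)"
  proof -
    fix u v and t :: real assume u: "u\<in>?Z" and v: "v\<in>?Z" and ts: "t>0"
    have A: "((MX a b) \<longlongrightarrow> MX a b t) (at_left t)" if "a\<in>X" "b\<in>X" for a b
      using fm_D(7)[OF na_D(1)[OF X]] that ts by auto
    have B: "((MY a b) \<longlongrightarrow> MY a b t) (at_left t)" if "a\<in>Y" "b\<in>Y" for a b
      using fm_D(7)[OF na_D(1)[OF Y]] that ts by auto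
    have e1: "glue MX MY (Inl a) (Inl b) = MX a b" for a b by (rule ext) simp
    have e2: "glue MX MY (Inr a) (Inr b) = MY a b" for a b by (rule ext) simp
    have e3: "glue MX MY (Inl a) (Inr b) = (\<lambda>_. 0)" for a b by (rule ext) simp
    have e4: "glue MX MY (Inr a) (Inl b) = (\<lambda>_. 0)" for a b by (rule ext) simp
    show "((?M u v) \<longlongrightarrow> ?M u v t) (at_left t)"
      using u v A B by (auto simp: e1 e2 e3 e4)
  qed
  have na: "\<And>u v w t s. u\<in>?Z \<Longrightarrow> v\<in>?Z \<Longrightarrow> w\<in>?Z \<Longrightarrow> t>0 \<Longrightarrow> s>0 \<Longrightarrow> ?M u w (max t s) \<ge> T (?M u v t) (?M v w s)"
  proof -
    fix u v w and t s :: real assume u: "u\<in>?Z" and v: "v\<in>?Z" and w: "w\<in>?Z" and ts: "t>0" "s>0"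
    have A: "T (MX a b t) (MX b c s) \<le> MX a c (max t s)" if "a\<in>X" "b\<in>X" "c\<in>X" for a b c
      using na_D(2)[OF X] that ts by auto
    have B: "T (MY a b t) (MY b c s) \<le> MY a c (max t s)" if "a\<in>Y" "b\<in>Y" "c\<in>Y" for a b c
      using na_D(2)[OF Y] that ts by auto
    show "?M u w (max t s) \<ge> T (?M u v t) (?M v w s)"
      using u v w A B tn(5,6) rX rY ts by auto
  qed
  have "fuzzy_metric ?Z ?M T" unfolding fuzzy_metric_def
    apply (intro conjI)
    subgoal by (rule T)
    subgoal using r by blast
    subgoal using z0 by blast
    subgoal using km2 by blast
    subgoal using sym by blast
    subgoal using tri by blast
    subgoal using lc by blast
    done
  then have "na_fuzzy_metric ?Z ?M T" unfolding na_fuzzy_metric_def using na by blast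
  then show ?thesis unfolding admissible_def by simp
qed

lemma ball_open:
  assumes N: "na_fuzzy_metric X M T" and x: "x\<in>X" and t: "t>0" and e: "0<e" "e<1"
  shows "fopen X M (fball X M x e t)"
  unfolding fopen_def
proof (intro conjI ballI)
  show "fball X M x e t \<subseteq> X" unfolding fball_def by auto
  fix y assume y: "y \<in> fball X M x e t"
  have yX: "y\<in>X" and r: "M x y t > 1 - e" using y unfolding fball_def by auto
  have T: "cont_tnorm T" using fm_D(1)[OF na_D(1)[OF N]] .
  have rng: "\<And>a b s. a\<in>X \<Longrightarrow> b\<in>X \<Longrightarrow> s\<ge>0 \<Longrightarrow> M a b s \<in> {0..1}"
    using fm_D(2)[OF na_D(1)[OF N]] by blast
  define r0 where "r0 = M x y t"
  have r01: "r0 \<in> {0..1}" using rng[OF x yX] t unfolding r0_def by auto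
  have cT: "continuous_on ({0..1} \<times> {0..1}) (\<lambda>(a, b). T a b)" by (rule ct_cont[OF T])
  have c1: "continuous_on {0..1} (\<lambda>b. (r0, b))" by (intro continuous_intros)
  have c2: "continuous_on {0..1} (\<lambda>b. T r0 b)"
  proof -
    have sub: "(\<lambda>b. (r0, b)) ` {0..1} \<subseteq> {0..1} \<times> {0..1}" using r01 by auto
    show ?thesis using continuous_on_compose2[OF cT c1 sub] by simp
  qed
  have T1: "T r0 1 = r0" using tn_facts(3)[OF T r01] .
  obtain d where d: "d>0" and dd: "\<And>b. b\<in>{0..1} \<Longrightarrow> dist b 1 < d \<Longrightarrow> dist (T r0 b) (T r0 1) < r0 - (1 - e)"
    using c2 unfolding continuous_on_iff
    by (metis atLeastAtMost_iff diff_gt_0_iff_gt le_numeral_extra(4) order_refl r r0_def zero_less_one_class.zero_le_one)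
  define \<delta> where "\<delta> = min d (1/2)"
  show "\<exists>e' t'. 0 < e' \<and> e' < 1 \<and> 0 < t' \<and> fball X M y e' t' \<subseteq> fball X M x e t"
  proof (intro exI conjI)
    show "0 < \<delta>" "\<delta> < 1" using d unfolding \<delta>_def by auto
    show "0 < t" by fact
    show "fball X M y \<delta> t \<subseteq> fball X M x e t"
    proof
      fix w assume w: "w \<in> fball X M y \<delta> t"
      have wX: "w\<in>X" and m: "M y w t > 1 - \<delta>" using w unfolding fball_def by auto
      have m01: "M y w t \<in> {0..1}" using rng[OF yX wX] t by auto
      have "dist (M y w t) 1 < d" using m m01 unfolding \<delta>_def dist_real_def by auto
      then have "dist (T r0 (M y w t)) r0 < r0 - (1 - e)" using dd[OF m01] T1 by simp
      then have "T r0 (M y w t) > 1 - e" unfolding dist_real_def by auto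
      moreover have "M x w (max t t) \<ge> T (M x y t) (M y w t)"
        using na_D(2)[OF N] x yX wX t by blast
      ultimately have "M x w t > 1 - e" unfolding r0_def by auto
      then show "w \<in> fball X M x e t" using wX unfolding fball_def by auto
    qed
  qed
qed

lemma finite_net:
  assumes N: "na_fuzzy_metric X M T" and C: "fcompact X M" and t: "t>0" and e: "0<e" "e<1"
  shows "\<exists>C. finite C \<and> C \<subseteq> X \<and> (\<forall>x\<in>X. \<exists>c\<in>C. M x c t > 1 - e)"
proof -
  let ?U = "(\<lambda>c. fball X M c e t) ` X"
  have "\<forall>U\<in>?U. fopen X M U" using ball_open[OF N _ t e] by auto
  moreover have "X \<subseteq> \<Union>?U"
  proof
    fix x assume x: "x\<in>X"
    have "M x x t = 1" using fm_D(4)[OF na_D(1)[OF N]] x t by blast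
    then have "x \<in> fball X M x e t" using x e unfolding fball_def by auto
    then show "x \<in> \<Union>?U" using x by auto
  qed
  ultimately obtain F where F: "F \<subseteq> ?U" "finite F" "X \<subseteq> \<Union>F"
    using C unfolding fcompact_def by meson
  then obtain C where Cs: "C \<subseteq> X" "finite C" "F = (\<lambda>c. fball X M c e t) ` C"
    by (meson finite_subset_image)
  have "\<forall>x\<in>X. \<exists>c\<in>C. M x c t > 1 - e"
  proof
    fix x assume x: "x\<in>X"
    then obtain c where c: "c\<in>C" "x \<in> fball X M c e t" using F Cs by auto
    have "M c x t = M x c t" using fm_D(5)[OF na_D(1)[OF N]] x c Cs t by blast
    then show "\<exists>c\<in>C. M x c t > 1 - e" using c unfolding fball_def by auto
  qed
  then show ?thesis using Cs by blast
qed

lemma key: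
  assumes T: "cont_tnorm T" and Ad: "admissible X MX Y MY T M"
    and a: "a\<in>X" "a'\<in>X" and b: "b\<in>Y" "b'\<in>Y" and t: "t>0" and e: "0<e" "e<1"
    and p: "M (Inl a) (Inr b) t \<ge> 1 - e" and q: "M (Inl a') (Inr b') t \<ge> 1 - e"
  shows "MX a a' t \<ge> T (T (MY b b' t) (1 - e)) (1 - e) \<and> MY b b' t \<ge> T (T (MX a a' t) (1 - e)) (1 - e)"
proof -
  let ?Z = "Inl ` X \<union> Inr ` Y"
  have N: "na_fuzzy_metric ?Z M T" using Ad unfolding admissible_def by blast
  have rng: "\<And>u v. u\<in>?Z \<Longrightarrow> v\<in>?Z \<Longrightarrow> M u v t \<in> {0..1}"
    using fm_D(2)[OF na_D(1)[OF N]] t by auto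
  have sym: "\<And>u v. u\<in>?Z \<Longrightarrow> v\<in>?Z \<Longrightarrow> M u v t = M v u t"
    using fm_D(5)[OF na_D(1)[OF N]] t by auto
  have na: "\<And>u v w. u\<in>?Z \<Longrightarrow> v\<in>?Z \<Longrightarrow> w\<in>?Z \<Longrightarrow> M u w t \<ge> T (M u v t) (M v w t)"
  proof -
    fix u v w assume "u\<in>?Z" "v\<in>?Z" "w\<in>?Z"
    then have "M u w (max t t) \<ge> T (M u v t) (M v w t)" using na_D(2)[OF N] t by blast
    then show "M u w t \<ge> T (M u v t) (M v w t)" by simp
  qed
  have MXe: "MX a a' t = M (Inl a) (Inl a') t" using Ad a t unfolding admissible_def by auto
  have MYe: "MY b b' t = M (Inr b) (Inr b') t" using Ad b t unfolding admissible_def by auto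
  have tr: "\<And>a b. a\<in>{0..1} \<Longrightarrow> b\<in>{0..1} \<Longrightarrow> T a b \<in> {0..1}"
    and tc: "\<And>a b. a\<in>{0..1} \<Longrightarrow> b\<in>{0..1} \<Longrightarrow> T a b = T b a"
    and tm: "\<And>a b c d. a\<in>{0..1} \<Longrightarrow> b\<in>{0..1} \<Longrightarrow> c\<in>{0..1} \<Longrightarrow> d\<in>{0..1} \<Longrightarrow> a \<le> c \<Longrightarrow> b \<le> d \<Longrightarrow> T a b \<le> T c d"
    using tn_facts(1,2,4)[OF T] by blast+
  have e1: "1 - e \<in> {0..1}" using e by auto
  have A: "Inl a \<in> ?Z" "Inl a' \<in> ?Z" "Inr b \<in> ?Z" "Inr b' \<in> ?Z" using a b by auto
  define P where "P = M (Inl a) (Inr b) t"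
  define Q where "Q = M (Inl a') (Inr b') t"
  define U where "U = M (Inl a) (Inl a') t"
  define V where "V = M (Inr b) (Inr b') t"
  have PQ: "P \<in> {0..1}" "Q \<in> {0..1}" "U \<in> {0..1}" "V \<in> {0..1}"
    using rng A unfolding P_def Q_def U_def V_def by auto
  have "U \<ge> T (M (Inl a) (Inr b') t) (M (Inr b') (Inl a') t)" unfolding U_def using na A by blast
  moreover have "M (Inr b') (Inl a') t = Q" unfolding Q_def using sym A by blast
  moreover have "M (Inl a) (Inr b') t \<ge> T P V" unfolding P_def V_def using na A by blast
  moreover have "M (Inl a) (Inr b') t \<in> {0..1}" using rng A by blast
  ultimately have "U \<ge> T (T P V) Q"
    using tm[of "T P V" Q "M (Inl a) (Inr b') t" Q] tr PQ by (meson order_trans order_refl)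
  moreover have "T (T P V) Q \<ge> T (T (1-e) V) (1-e)"
    using tm[of "T (1-e) V" "1-e" "T P V" Q] tm[of "1-e" V P V] tr PQ e1 p q
    unfolding P_def Q_def by auto
  moreover have "T (1-e) V = T V (1-e)" using tc e1 PQ by blast
  ultimately have G1: "U \<ge> T (T V (1-e)) (1-e)" by auto
  have "V \<ge> T (M (Inr b) (Inl a') t) (M (Inl a') (Inr b') t)" unfolding V_def using na A by blast
  moreover have "M (Inr b) (Inl a') t \<ge> T (M (Inr b) (Inl a) t) U" unfolding U_def using na A by blast
  moreover have "M (Inr b) (Inl a) t = P" unfolding P_def using sym A by blast
  moreover have "M (Inr b) (Inl a') t \<in> {0..1}" using rng A by blast
  ultimately have "V \<ge> T (T P U) Q"
    using tm[of "T P U" Q "M (Inr b) (Inl a') t" Q] tr PQ unfolding Q_def by (meson order_trans order_refl)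
  moreover have "T (T P U) Q \<ge> T (T (1-e) U) (1-e)"
    using tm[of "T (1-e) U" "1-e" "T P U" Q] tm[of "1-e" U P U] tr PQ e1 p q
    unfolding P_def Q_def by auto
  moreover have "T (1-e) U = T U (1-e)" using tc e1 PQ by blast
  ultimately have G2: "V \<ge> T (T U (1-e)) (1-e)" by auto
  show ?thesis using G1 G2 MXe MYe unfolding U_def V_def by simp
qed

lemma main_aux:
  fixes X :: "'a set" and MX :: "'a \<Rightarrow> 'a \<Rightarrow> real \<Rightarrow> real"
    and Y :: "'b set" and MY :: "'b \<Rightarrow> 'b \<Rightarrow> real \<Rightarrow> real"
    and T :: "real \<Rightarrow> real \<Rightarrow> real" and t e :: real
  assumes S: "{M. admissible X MX Y MY T M} \<noteq> {}"
    and "X \<noteq> {}" and "Y \<noteq> {}"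
    and t: "t > 0" and "0 < e" and "e < 1"
    and G: "M_GH X MX Y MY T t > 1 - e"
  shows "\<exists>M. admissible X MX Y MY T M \<and> (\<forall>x\<in>X. \<exists>y\<in>Y. M (Inl x) (Inr y) t > 1 - e)
     \<and> (\<forall>y\<in>Y. \<exists>x\<in>X. M (Inl x) (Inr y) t > 1 - e)"
proof -
  let ?S = "{M. admissible X MX Y MY T M}"
  let ?H = "\<lambda>M. hausdorff_fm M (Inl ` X) (Inr ` Y) t"
  obtain M where M: "admissible X MX Y MY T M" and HM: "?H M > 1 - e"
  proof (cases "bdd_above (?H ` ?S)")
    case True
    then show ?thesis using G less_cSUP_iff[OF S True] that unfolding M_GH_def by auto
  next
    case False
    then have "\<not> (\<forall>x\<in>?H ` ?S. x \<le> 1 - e)" unfolding bdd_above_def by blast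
    then show ?thesis using that by (auto simp: not_le)
  qed
  let ?Z = "Inl ` X \<union> Inr ` Y"
  have N: "na_fuzzy_metric ?Z M T" using M unfolding admissible_def by blast
  have rng: "\<And>u v. u\<in>?Z \<Longrightarrow> v\<in>?Z \<Longrightarrow> M u v t \<in> {0..1}"
    using fm_D(2)[OF na_D(1)[OF N]] t by auto
  define f where "f a = (SUP b\<in>Inr ` Y. M a b t)" for a
  define g where "g b = (SUP a\<in>Inl ` X. M a b t)" for b
  have bf: "bdd_above ((\<lambda>b. M a b t) ` (Inr ` Y))" if "a \<in> ?Z" for a
    using rng that unfolding bdd_above_def by (intro exI[of _ 1]) auto
  have bg: "bdd_above ((\<lambda>a. M a b t) ` (Inl ` X))" if "b \<in> ?Z" for b
    using rng that unfolding bdd_above_def by (intro exI[of _ 1]) auto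
  obtain y0 where y0: "y0 \<in> Y" using assms by auto
  obtain x0 where x0: "x0 \<in> X" using assms by auto
  have f0: "f a \<ge> 0" if "a \<in> ?Z" for a
    unfolding f_def using cSUP_upper2[OF bf[OF that], of "Inr y0" 0] y0 rng that by auto
  have g0: "g b \<ge> 0" if "b \<in> ?Z" for b
    unfolding g_def using cSUP_upper2[OF bg[OF that], of "Inl x0" 0] x0 rng that by auto
  have bbf: "bdd_below (f ` Inl ` X)" using f0 unfolding bdd_below_def by (intro exI[of _ 0]) auto
  have bbg: "bdd_below (g ` Inr ` Y)" using g0 unfolding bdd_below_def by (intro exI[of _ 0]) auto
  have H: "?H M = min (INF a\<in>Inl ` X. f a) (INF b\<in>Inr ` Y. g b)"
    unfolding hausdorff_fm_def f_def g_def by simp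
  have c1: "\<forall>x\<in>X. \<exists>y\<in>Y. M (Inl x) (Inr y) t > 1 - e"
  proof
    fix x assume x: "x \<in> X"
    have "(INF a\<in>Inl ` X. f a) \<le> f (Inl x)" using cINF_lower[OF bbf] x by auto
    then have "1 - e < f (Inl x)" using HM H by linarith
    then obtain b where "b \<in> Inr ` Y" "1 - e < M (Inl x) b t"
      unfolding f_def using less_cSUP_iff[OF _ bf[of "Inl x"], of "1 - e"] x y0 by auto
    then show "\<exists>y\<in>Y. M (Inl x) (Inr y) t > 1 - e" by auto
  qed
  have c2: "\<forall>y\<in>Y. \<exists>x\<in>X. M (Inl x) (Inr y) t > 1 - e"
  proof
    fix y assume y: "y \<in> Y"
    have "(INF b\<in>Inr ` Y. g b) \<le> g (Inr y)" using cINF_lower[OF bbg] y by auto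
    then have "1 - e < g (Inr y)" using HM H by linarith
    then obtain a where "a \<in> Inl ` X" "1 - e < M a (Inr y) t"
      unfolding g_def using less_cSUP_iff[OF _ bg[of "Inr y"], of "1 - e"] y x0 by auto
    then show "\<exists>x\<in>X. M (Inl x) (Inr y) t > 1 - e" by auto
  qed
  show ?thesis using M c1 c2 by blast
qed

theorem mainTheorem1:
  fixes X :: "'a set" and MX :: "'a \<Rightarrow> 'a \<Rightarrow> real \<Rightarrow> real"
    and Y :: "'b set" and MY :: "'b \<Rightarrow> 'b \<Rightarrow> real \<Rightarrow> real"
    and T :: "real \<Rightarrow> real \<Rightarrow> real" and t e :: real
  assumes "cont_tnorm T"
    and "na_fuzzy_metric X MX T" and "na_fuzzy_metric Y MY T"
    and "X \<noteq> {}" and "Y \<noteq> {}"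
    and "fcompact X MX" and "fcompact Y MY"
    and "t > 0" and "0 < e" and "e < 1"
    and "M_GH X MX Y MY T t > 1 - e"
  shows "\<exists>(n::nat) (xs::nat \<Rightarrow> 'a) (ys::nat \<Rightarrow> 'b).
           (\<forall>i<n. xs i \<in> X \<and> ys i \<in> Y) \<and>
           (\<forall>x\<in>X. \<exists>i<n. MX x (xs i) t > T (T (1 - e) (1 - e)) (1 - e)) \<and>
           (\<forall>y\<in>Y. \<exists>i<n. MY y (ys i) t > T (T (1 - e) (1 - e)) (1 - e)) \<and>
           (\<forall>i<n. \<forall>j<n.
              MX (xs i) (xs j) t \<ge> T (T (MY (ys i) (ys j) t) (1 - e)) (1 - e) \<and>
              MY (ys i) (ys j) t \<ge> T (T (MX (xs i) (xs j) t) (1 - e)) (1 - e))"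
proof -
  have S: "{M. admissible X MX Y MY T M} \<noteq> {}" using admissible_exists[OF assms(1-3)] by auto
  obtain M where M: "admissible X MX Y MY T M"
    and c1: "\<forall>x\<in>X. \<exists>y\<in>Y. M (Inl x) (Inr y) t > 1 - e"
    and c2: "\<forall>y\<in>Y. \<exists>x\<in>X. M (Inl x) (Inr y) t > 1 - e"
    using main_aux[OF S assms(4,5,8,9,10,11)] by blast
  obtain CX where CX: "finite CX" "CX \<subseteq> X" "\<forall>x\<in>X. \<exists>c\<in>CX. MX x c t > 1 - e"
    using finite_net[OF assms(2) assms(6) assms(8) assms(9,10)] by blast
  obtain CY where CY: "finite CY" "CY \<subseteq> Y" "\<forall>y\<in>Y. \<exists>c\<in>CY. MY y c t > 1 - e"
    using finite_net[OF assms(3) assms(7) assms(8) assms(9,10)] by blast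
  have "\<forall>c\<in>CX. \<exists>y. y \<in> Y \<and> M (Inl c) (Inr y) t > 1 - e" using c1 CX(2) by blast
  from bchoice[OF this] obtain fy where fy: "\<forall>c\<in>CX. fy c \<in> Y \<and> M (Inl c) (Inr (fy c)) t > 1 - e"
    by blast
  have "\<forall>d\<in>CY. \<exists>x. x \<in> X \<and> M (Inl x) (Inr d) t > 1 - e" using c2 CY(2) by blast
  from bchoice[OF this] obtain gx where gx: "\<forall>d\<in>CY. gx d \<in> X \<and> M (Inl (gx d)) (Inr d) t > 1 - e"
    by blast
  define P where "P = (\<lambda>c. (c, fy c)) ` CX \<union> (\<lambda>d. (gx d, d)) ` CY"
  have "finite P" unfolding P_def using CX CY by auto
  then obtain ps where ps: "set ps = P" using finite_list by blast
  have Pp: "\<forall>p\<in>P. fst p \<in> X \<and> snd p \<in> Y \<and> M (Inl (fst p)) (Inr (snd p)) t > 1 - e"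
    unfolding P_def using fy gx CX CY by auto
  note tn = tn_facts[OF assms(1)]
  have e1: "1 - e \<in> {0..1}" using assms by auto
  have t3: "T (T (1 - e) (1 - e)) (1 - e) \<le> 1 - e"
  proof -
    have a: "T (1 - e) (1 - e) \<in> {0..1}" using tn(1)[OF e1 e1] .
    have "T (T (1 - e) (1 - e)) (1 - e) \<le> T 1 (1 - e)"
      using tn(4)[OF a e1 _ e1] a by auto
    also have "\<dots> = 1 - e" using tn(2)[of 1 "1 - e"] tn(3)[OF e1] e1 by auto
    finally show ?thesis .
  qed
  have mem: "\<exists>i<length ps. fst (ps ! i) = a \<and> snd (ps ! i) = b" if "(a, b) \<in> P" for a b
    using that ps by (metis fst_conv snd_conv in_set_conv_nth)
  show ?thesis
  proof (rule exI[of _ "length ps"], rule exI[of _ "\<lambda>i. fst (ps ! i)"], rule exI[of _ "\<lambda>i. snd (ps ! i)"],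
      intro conjI allI impI ballI)
    fix i assume "i < length ps"
    then have "ps ! i \<in> P" using ps nth_mem by blast
    then show "fst (ps ! i) \<in> X" "snd (ps ! i) \<in> Y" using Pp by auto
  next
    fix x assume x: "x \<in> X"
    then obtain c where c: "c \<in> CX" "MX x c t > 1 - e" using CX by blast
    then have "(c, fy c) \<in> P" unfolding P_def by auto
    then obtain i where i: "i < length ps" "fst (ps ! i) = c" using mem by blast
    then have "MX x (fst (ps ! i)) t > T (T (1 - e) (1 - e)) (1 - e)" using c t3 by simp
    then show "\<exists>i<length ps. MX x (fst (ps ! i)) t > T (T (1 - e) (1 - e)) (1 - e)"
      using i(1) by blast
  next
    fix y assume y: "y \<in> Y"
    then obtain d where d: "d \<in> CY" "MY y d t > 1 - e" using CY by blast
    then have "(gx d, d) \<in> P" unfolding P_def by auto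
    then obtain i where i: "i < length ps" "snd (ps ! i) = d" using mem by blast
    then have "MY y (snd (ps ! i)) t > T (T (1 - e) (1 - e)) (1 - e)" using d t3 by simp
    then show "\<exists>i<length ps. MY y (snd (ps ! i)) t > T (T (1 - e) (1 - e)) (1 - e)"
      using i(1) by blast
  next
    fix i j assume i: "i < length ps" and j: "j < length ps"
    then have "ps ! i \<in> P" "ps ! j \<in> P" using ps nth_mem by blast+
    then have Pi: "fst (ps ! i) \<in> X" "snd (ps ! i) \<in> Y" "M (Inl (fst (ps ! i))) (Inr (snd (ps ! i))) t \<ge> 1 - e"
      and Pj: "fst (ps ! j) \<in> X" "snd (ps ! j) \<in> Y" "M (Inl (fst (ps ! j))) (Inr (snd (ps ! j))) t \<ge> 1 - e"
      using Pp by (meson less_imp_le)+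
    have K: "MX (fst (ps ! i)) (fst (ps ! j)) t \<ge> T (T (MY (snd (ps ! i)) (snd (ps ! j)) t) (1 - e)) (1 - e)
       \<and> MY (snd (ps ! i)) (snd (ps ! j)) t \<ge> T (T (MX (fst (ps ! i)) (fst (ps ! j)) t) (1 - e)) (1 - e)"
      by (rule key[OF assms(1) M Pi(1) Pj(1) Pi(2) Pj(2) assms(8,9,10) Pi(3) Pj(3)])
    then show "MX (fst (ps ! i)) (fst (ps ! j)) t \<ge> T (T (MY (snd (ps ! i)) (snd (ps ! j)) t) (1 - e)) (1 - e)" by blast
    show "MY (snd (ps ! i)) (snd (ps ! j)) t \<ge> T (T (MX (fst (ps ! i)) (fst (ps ! j)) t) (1 - e)) (1 - e)" using K by blast
  qed
qed

end
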